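(* Let $\Theta=\{x_1,\dots,x_n\}$ be a finite frame of discernment and let $m$ be a basic probability assignment on $\Theta$ whose pignistic probabilities satisfy $\mathrm{BetP}(x)>0$ for every $x\in\Theta$. Fix a nonempty subset $B\subseteq\Theta$ with $|B|=g$. Then $$\sum_{A\in \mathrm{PES}(\Theta):\ \mathrm{Element}(A)=B} \mathrm{Sord}(A)=1,$$ i.e. the ordered support degrees of the $g!$ permutation events that are orderings of the elements of $B$ sum to $1$.
   Context: A basic probability assignment (BPA) on a finite set $\Theta$ is a map $m:2^{\Theta}\to[0,1]$ with $m(\emptyset)=0$ and $\sum_{A\subseteq\Theta}m(A)=1$. Its pignistic probability transformation is $\mathrm{BetP}(x)=\sum_{A\subseteq\Theta,\,x\in A} m(A)/|A|$ for $x\in\Theta$. The permutation event space $\mathrm{PES}(\Theta)$ is the set of all ordered tuples $A=(\beta_1,\dots,\beta_k)$ of distinct elements of $\Theta$, $0\le k\le n$ (permutation events); $|A|=k$ and $\mathrm{Element}(A)=\{\beta_1,\dots,\beta_k\}$ denotes the underlying unordered set. For a nonempty permutation event $A=(\beta_1,\dots,\beta_{|A|})$, its ordered support degree is $$\mathrm{Sord}(A)=\prod_{i=1}^{|A|}\frac{\mathrm{BetP}(\beta_i)}{\sum_{j=i}^{|A|}\mathrm{BetP}(\beta_j)}.$$ *)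

theory Defs
  imports "HOL-Analysis.Analysis"
begin

text \<open>A basic probability assignment on the frame Theta, given as a function on subsets;
  only its values on subsets of Theta are meaningful.\<close>
definition is_BPA :: "'a set \<Rightarrow> ('a set \<Rightarrow> real) \<Rightarrow> bool" where
  "is_BPA Theta m \<longleftrightarrow> m {} = 0 \<and> (\<forall>A\<in>Pow Theta. 0 \<le> m A \<and> m A \<le> 1)
     \<and> (\<Sum>A\<in>Pow Theta. m A) = 1"

definition BetP :: "'a set \<Rightarrow> ('a set \<Rightarrow> real) \<Rightarrow> 'a \<Rightarrow> real" where
  "BetP Theta m x = (\<Sum>A\<in>{A\<in>Pow Theta. x \<in> A}. m A / real (card A))"

definition PES :: "'a set \<Rightarrow> 'a list set" where
  "PES Theta = {xs. distinct xs \<and> set xs \<subseteq> Theta}"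

definition Element :: "'a list \<Rightarrow> 'a set" where
  "Element A = set A"

definition Sord :: "'a set \<Rightarrow> ('a set \<Rightarrow> real) \<Rightarrow> 'a list \<Rightarrow> real" where
  "Sord Theta m A = (\<Prod>i<length A. BetP Theta m (A ! i) /
       (\<Sum>j\<in>{i..<length A}. BetP Theta m (A ! j)))"

end

theory Submission
  imports Defs "HOL-Combinatorics.Multiset_Permutations"
begin

definition sordp :: "('a \<Rightarrow> real) \<Rightarrow> 'a list \<Rightarrow> real" where
  "sordp p xs = (\<Prod>i<length xs. p (xs ! i) / (\<Sum>j\<in>{i..<length xs}. p (xs ! j)))"

lemma sum_shift_nth:
  "(\<Sum>j\<in>{Suc i..<Suc n}. f ((x # xs) ! j)) = (\<Sum>j\<in>{i..<n}. f (xs ! j))"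
proof -
  have "(\<Sum>j\<in>{Suc i..<Suc n}. f ((x # xs) ! j)) = (\<Sum>j\<in>Suc ` {i..<n}. f ((x # xs) ! j))"
    by simp
  also have "\<dots> = (\<Sum>j\<in>{i..<n}. f (xs ! j))"
    by (subst sum.reindex) auto
  finally show ?thesis .
qed

lemma sordp_Cons:
  "sordp p (x # xs) = p x / (p x + sum_list (map p xs)) * sordp p xs"
proof -
  have "sordp p (x # xs) = (\<Prod>i<Suc (length xs). p ((x#xs) ! i) / (\<Sum>j\<in>{i..<Suc (length xs)}. p ((x#xs) ! j)))"
    by (simp add: sordp_def)
  also have "\<dots> = p x / (\<Sum>j\<in>{0..<Suc (length xs)}. p ((x#xs) ! j)) *
      (\<Prod>i<length xs. p ((x#xs) ! Suc i) / (\<Sum>j\<in>{Suc i..<Suc (length xs)}. p ((x#xs) ! j)))"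
    by (subst prod.lessThan_Suc_shift) simp
  also have "(\<Sum>j\<in>{0..<Suc (length xs)}. p ((x#xs) ! j)) = p x + (\<Sum>j\<in>{0..<length xs}. p (xs ! j))"
  proof -
    have "(\<Sum>j\<in>{0..<Suc (length xs)}. p ((x#xs) ! j)) = p x + (\<Sum>j\<in>{Suc 0..<Suc (length xs)}. p ((x#xs) ! j))"
      by (subst sum.atLeast_Suc_lessThan) auto
    then show ?thesis
      by (simp only: sum_shift_nth[where f=p and i=0 and n="length xs" and x=x and xs=xs])
  qed
  also have "(\<Sum>j\<in>{0..<length xs}. p (xs ! j)) = sum_list (map p xs)"
    by (simp add: sum_list_sum_nth)
  also have "(\<Prod>i<length xs. p ((x#xs) ! Suc i) / (\<Sum>j\<in>{Suc i..<Suc (length xs)}. p ((x#xs) ! j)))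
      = sordp p xs"
    unfolding sordp_def by (simp only: sum_shift_nth nth_Cons_Suc)
  finally show ?thesis .
qed

lemma sordp_sum:
  assumes "finite B" "\<forall>x\<in>B. p x > 0"
  shows "(\<Sum>xs\<in>permutations_of_set B. sordp p xs) = 1"
  using assms
proof (induction "card B" arbitrary: B)
  case 0
  then have "B = {}" by auto
  then show ?case by (simp add: sordp_def)
next
  case (Suc n)
  then have ne: "B \<noteq> {}" by auto
  have pos: "sum p B > 0" using Suc.prems ne by (intro sum_pos) auto
  have "(\<Sum>xs\<in>permutations_of_set B. sordp p xs)
     = (\<Sum>x\<in>B. \<Sum>xs\<in>(#) x ` permutations_of_set (B - {x}). sordp p xs)"
    unfolding permutations_of_set_nonempty[OF ne]
    by (rule sum.UNION_disjoint) (use Suc.prems in auto)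
  also have "\<dots> = (\<Sum>x\<in>B. p x / sum p B)"
  proof (rule sum.cong[OF refl])
    fix x assume x: "x \<in> B"
    have "(\<Sum>xs\<in>(#) x ` permutations_of_set (B - {x}). sordp p xs)
        = (\<Sum>xs\<in>permutations_of_set (B - {x}). sordp p (x # xs))"
      by (subst sum.reindex) (auto simp: inj_on_def)
    also have "\<dots> = (\<Sum>xs\<in>permutations_of_set (B - {x}). p x / sum p B * sordp p xs)"
    proof (rule sum.cong[OF refl])
      fix xs assume "xs \<in> permutations_of_set (B - {x})"
      then have "set xs = B - {x}" "distinct xs" by (auto dest: permutations_of_setD)
      then have "sum_list (map p xs) = sum p (B - {x})"
        by (metis sum_list_distinct_conv_sum_set)
      then have "p x + sum_list (map p xs) = sum p B"
        using x Suc.prems by (simp add: sum.remove)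
      then show "sordp p (x # xs) = p x / sum p B * sordp p xs" by (simp add: sordp_Cons)
    qed
    also have "\<dots> = p x / sum p B * (\<Sum>xs\<in>permutations_of_set (B - {x}). sordp p xs)"
      by (simp add: sum_distrib_left)
    also have "(\<Sum>xs\<in>permutations_of_set (B - {x}). sordp p xs) = 1"
      using Suc.hyps(1)[of "B - {x}"] Suc.hyps(2) Suc.prems x by auto
    finally show "(\<Sum>xs\<in>(#) x ` permutations_of_set (B - {x}). sordp p xs) = p x / sum p B" by simp
  qed
  also have "\<dots> = 1" using pos by (simp add: sum_divide_distrib[symmetric])
  finally show ?case .
qed

theorem corollary1:
  fixes Theta :: "'a set" and m :: "'a set \<Rightarrow> real" and B :: "'a set"
  assumes "finite Theta"
    and "is_BPA Theta m"
    and "\<forall>x\<in>Theta. BetP Theta m x > 0"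
    and "B \<subseteq> Theta" and "B \<noteq> {}"
  shows "(\<Sum>A\<in>{A\<in>PES Theta. Element A = B}. Sord Theta m A) = 1"
proof -
  have eq: "{A\<in>PES Theta. Element A = B} = permutations_of_set B"
    using assms(4) by (auto simp: PES_def Element_def permutations_of_set_def)
  have "Sord Theta m = sordp (BetP Theta m)"
    by (auto simp: Sord_def sordp_def fun_eq_iff)
  then show ?thesis unfolding eq
    using sordp_sum[of B "BetP Theta m"] assms finite_subset by auto
qed

end
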